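(* In Model B$_K$ below, assume $l\to\infty$ and $lp\to0$ as $d\to\infty$. Then for the $c$-segmentation rule with $c=d/l$, $$\mathbb{P}(w\text{ is misclassified})\to0\quad\text{as }d\to\infty.$$
   Context: Segmentation rule. Let $d,c$ be positive integers with $c\mid d$. For $x\in\mathbb{R}^d$ and $1\le j\le c$ let $x_j\in\mathbb{R}^{d/c}$ denote its $j$-th block $(x_{(j-1)d/c+1},\dots,x_{jd/c})$, so that $x=x_1\circ\cdots\circ x_c$ (concatenation). Given dictionary words $w^1,\dots,w^K\in\mathbb{R}^d$ ($w^k$ representing class $k$) and a test word $w\in\mathbb{R}^d$, for each $j$ let $U_j\in\{1,\dots,K\}$ be an index $k$ minimizing the Euclidean distance $\|w_j-w^k_j\|$ in $\mathbb{R}^{d/c}$, chosen uniformly at random among all minimizers (independently of everything else). The $c$-segmentation rule assigns to $w$ the class $\chi(w)\in\operatorname{argmax}_k\#\{j:U_j=k\}$, chosen uniformly at random among all maximizers. The case $c=1$ is the Euclidean (nearest-neighbour) rule and $c=d$ is coordinate-by-coordinate comparison. $w$ is classified correctly if $\chi(w)$ equals its true class, misclassified otherwise. Probabilities are over all random objects including tie-breaks. Model B$_K$. Let $d\ge1$, an integer $l\ge1$ with $l\mid d$, $N>0$, $p\in(0,1)$ (possibly depending on $d$) and a fixed integer $2\le K\le l+1$ be given. Split $\{1,\dots,d\}$ into the $d/l$ consecutive blocks $B_t=\{(t-1)l+1,\dots,tl\}$. Let $m_1=0\in\mathbb{R}^d$ and, for $k=2,\dots,K$, let $m_k\in\{0,1\}^d$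 be such that in every block $B_t$ exactly one coordinate of $m_k$ equals $1$ and all others equal $0$, the position of this $1$ inside $B_t$ being different for different $k$. Let $Y^{(0)},Y^{(1)},\dots,Y^{(K)}$ be independent random vectors in $\mathbb{R}^d$, each with i.i.d. coordinates satisfying $\mathbb{P}(Y_i=N)=p$, $\mathbb{P}(Y_i=0)=1-p$. The dictionary words are $w^k=m_k+Y^{(k)}$ (class $k$), $k=1,\dots,K$, and the test word is $w=m_1+Y^{(0)}$ (true class 1). *)

theory Defs
  imports "HOL-Probability.Probability"
begin

text \<open>Coordinates are 0-indexed: a vector in R^d is a function nat => real,
  only the values at i < d matter. Segment j (0 <= j < c) of length s = d div c
  is the index set {j*s ..< (j+1)*s}.\<close>

definition block_dist :: "nat \<Rightarrow> nat \<Rightarrow> (nat \<Rightarrow> real) \<Rightarrow> (nat \<Rightarrow> real) \<Rightarrow> real" where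
  "block_dist s j x y = sqrt (\<Sum>i\<in>{j * s ..< (j+1) * s}. (x i - y i)^2)"

definition nearest_classes ::
  "nat \<Rightarrow> nat \<Rightarrow> nat \<Rightarrow> (nat \<Rightarrow> nat \<Rightarrow> real) \<Rightarrow> (nat \<Rightarrow> real) \<Rightarrow> nat set" where
  "nearest_classes K s j dict w =
     {k\<in>{1..K}. \<forall>k'\<in>{1..K}. block_dist s j w (dict k) \<le> block_dist s j w (dict k')}"

definition votes :: "nat \<Rightarrow> (nat \<Rightarrow> nat) \<Rightarrow> nat \<Rightarrow> nat" where
  "votes c u k = card {j\<in>{..<c}. u j = k}"

definition winners :: "nat \<Rightarrow> nat \<Rightarrow> (nat \<Rightarrow> nat) \<Rightarrow> nat set" where
  "winners K c u = {k\<in>{1..K}. \<forall>k'\<in>{1..K}. votes c u k' \<le> votes c u k}"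

text \<open>Distribution of the class chi(w) assigned by the c-segmentation rule
  (including both uniform tie-breaks; the U_j are independent).\<close>
definition seg_rule ::
  "nat \<Rightarrow> nat \<Rightarrow> nat \<Rightarrow> (nat \<Rightarrow> nat \<Rightarrow> real) \<Rightarrow> (nat \<Rightarrow> real) \<Rightarrow> nat pmf" where
  "seg_rule d c K dict w =
     bind_pmf (Pi_pmf {..<c} 0 (\<lambda>j. pmf_of_set (nearest_classes K (d div c) j dict w)))
              (\<lambda>u. pmf_of_set (winners K c u))"

definition modelB_means :: "nat \<Rightarrow> nat \<Rightarrow> nat \<Rightarrow> (nat \<Rightarrow> nat \<Rightarrow> real) \<Rightarrow> bool" where
  "modelB_means d l K m \<longleftrightarrow>
     (\<forall>i<d. m 1 i = 0) \<and>
     (\<forall>k\<in>{2..K}. \<forall>i<d. m k i = 0 \<or> m k i = 1) \<and>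
     (\<forall>k\<in>{2..K}. \<forall>t<d div l. \<exists>!i. i \<in> {t * l ..< (t+1) * l} \<and> m k i = 1) \<and>
     (\<forall>k\<in>{2..K}. \<forall>k'\<in>{2..K}. k \<noteq> k' \<longrightarrow> (\<forall>i<d. \<not> (m k i = 1 \<and> m k' i = 1)))"

definition noise_pmf :: "nat \<Rightarrow> real \<Rightarrow> real \<Rightarrow> (nat \<Rightarrow> real) pmf" where
  "noise_pmf d N p = Pi_pmf {..<d} 0 (\<lambda>_. map_pmf (\<lambda>b. if b then N else 0) (bernoulli_pmf p))"

text \<open>Misclassification probability in Model B_K for the c-segmentation rule:
  Y 0, ..., Y K independent; dictionary words m k + Y k; test word m 1 + Y 0 (true class 1).\<close>
definition modelB_error ::
  "nat \<Rightarrow> real \<Rightarrow> real \<Rightarrow> nat \<Rightarrow> (nat \<Rightarrow> nat \<Rightarrow> real) \<Rightarrow> nat \<Rightarrow> real" where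
  "modelB_error d N p K m c = measure_pmf.prob
     (bind_pmf (Pi_pmf {..K} (\<lambda>_. 0) (\<lambda>_. noise_pmf d N p))
        (\<lambda>Y. seg_rule d c K (\<lambda>k i. m k i + Y k i) (\<lambda>i. m 1 i + Y 0 i)))
     {k. k \<noteq> 1}"

end

theory Submission
  imports Defs
begin

lemma nearest_ne:
  assumes "1 \<le> K"
  shows "nearest_classes K s j dict w \<noteq> {}"
proof -
  define f where "f = (\<lambda>k. block_dist s j w (dict k))"
  have fin: "finite (f ` {1..K})" and ne: "f ` {1..K} \<noteq> {}" using assms by auto
  obtain k where k: "k \<in> {1..K}" "f k = Min (f ` {1..K})"
    using Min_in[OF fin ne] by auto
  have "\<forall>k'\<in>{1..K}. f k \<le> f k'" using k fin by auto
  then show ?thesis using k unfolding nearest_classes_def f_def by auto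
qed

lemma seg_zero:
  assumes K: "1 \<le> K" and C: "C \<subseteq> {..<c}" "c < 2 * card C"
    and cl: "\<forall>t\<in>C. nearest_classes K (d div c) t dict w = {1}"
  shows "measure_pmf.prob (seg_rule d c K dict w) {k. k \<noteq> 1} = 0"
proof -
  have fn: "finite (nearest_classes K s j dict w)" for s j
    unfolding nearest_classes_def by auto
  have win: "winners K c u = {1}" if u: "u \<in> set_pmf (Pi_pmf {..<c} 0 (\<lambda>j. pmf_of_set (nearest_classes K (d div c) j dict w)))" for u
  proof -
    have ut: "u t \<in> nearest_classes K (d div c) t dict w" if "t < c" for t
      using u that by (auto simp: set_Pi_pmf PiE_dflt_def fn nearest_ne[OF K])
    have u1: "u t = 1" if "t \<in> C" for t
      using ut[of t] that C cl by auto
    have v1: "card C \<le> votes c u 1"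
      unfolding votes_def using C u1 by (intro card_mono) auto
    have vk: "votes c u k < votes c u 1" if "k \<noteq> 1" for k
    proof -
      have "{j\<in>{..<c}. u j = k} \<subseteq> {..<c} - C" using u1 that by auto
      then have "votes c u k \<le> card ({..<c} - C)" unfolding votes_def by (intro card_mono) auto
      also have "\<dots> = c - card C" using C by (simp add: card_Diff_subset finite_subset)
      finally show ?thesis using v1 C by linarith
    qed
    show ?thesis
    proof (rule set_eqI, rule iffI)
      fix x :: nat assume "x \<in> winners K c u"
      then have "x \<in> {1..K}" "votes c u 1 \<le> votes c u x" using K unfolding winners_def by auto
      then show "x \<in> {1}" using vk[of x] by (cases "x = 1") auto
    next
      fix x :: nat assume "x \<in> {1}"
      then show "x \<in> winners K c u" unfolding winners_def using K vk
        by (auto intro: less_imp_le) (metis le_refl less_imp_le vk)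
    qed
  qed
  show ?thesis unfolding measure_pmf_zero_iff seg_rule_def
    using win by auto
qed

lemma clean_block:
  assumes mm: "modelB_means d l K m" and ld: "l dvd d" and t: "t < d div l"
    and K: "1 \<le> K"
    and Y: "\<forall>k\<le>K. \<forall>i\<in>{t*l..<(t+1)*l}. Y k i = 0"
  shows "nearest_classes K l t (\<lambda>k i. m k i + Y k i) (\<lambda>i. m 1 i + Y 0 i) = {1}"
proof -
  have m1: "\<forall>i<d. m 1 i = 0" using mm unfolding modelB_means_def by (elim conjE)
  have m01: "\<forall>k\<in>{2..K}. \<forall>i<d. m k i = 0 \<or> m k i = 1" using mm unfolding modelB_means_def by (elim conjE)
  have mu: "\<forall>k\<in>{2..K}. \<forall>t<d div l. \<exists>!i. i \<in> {t * l ..< (t+1) * l} \<and> m k i = 1"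
    using mm unfolding modelB_means_def by (elim conjE)
  have id: "i < d" if "i \<in> {t*l..<(t+1)*l}" for i
  proof -
    have "(t+1)*l \<le> (d div l) * l" using t by (intro mult_right_mono) auto
    also have "\<dots> = d" using ld by simp
    finally show ?thesis using that by auto
  qed
  have Y0: "Y k i = 0" if "k \<le> K" "i \<in> {t*l..<(t+1)*l}" for k i using Y that by blast
  have d1: "block_dist l t (\<lambda>i. m 1 i + Y 0 i) (\<lambda>i. m 1 i + Y 1 i) = 0"
  proof -
    have "(\<Sum>i\<in>{t*l..<(t+1)*l}. (m 1 i + Y 0 i - (m 1 i + Y 1 i))^2) = 0"
    proof (rule sum.neutral, rule ballI)
      fix i assume i: "i \<in> {t*l..<(t+1)*l}"
      have "Y 0 i = 0" "Y 1 i = 0" using Y0[OF _ i] K by auto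
      then show "(m 1 i + Y 0 i - (m 1 i + Y 1 i))^2 = 0" by simp
    qed
    then show ?thesis unfolding block_dist_def by simp
  qed
  have dk: "block_dist l t (\<lambda>i. m 1 i + Y 0 i) (\<lambda>i. m k i + Y k i) = 1" if k: "k \<in> {2..K}" for k
  proof -
    have ex: "\<exists>!i. i \<in> {t * l ..< (t+1) * l} \<and> m k i = 1" using mu k t by blast
    then obtain i0 where i0: "i0 \<in> {t*l..<(t+1)*l}" "m k i0 = 1" by blast
    have un: "i = i0" if "i \<in> {t*l..<(t+1)*l}" "m k i = 1" for i
      using ex i0 that by blast
    have "(\<Sum>i\<in>{t*l..<(t+1)*l}. (m 1 i + Y 0 i - (m k i + Y k i))^2)
        = (\<Sum>i\<in>{t*l..<(t+1)*l}. if i = i0 then 1 else 0)"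
    proof (rule sum.cong)
      fix i assume i: "i \<in> {t*l..<(t+1)*l}"
      have a: "m 1 i = 0" using m1 id[OF i] by blast
      have b: "Y 0 i = 0" "Y k i = 0" using Y0[OF _ i] k by auto
      have c: "m k i = 0 \<or> m k i = 1" using m01 id[OF i] k by blast
      show "(m 1 i + Y 0 i - (m k i + Y k i))^2 = (if i = i0 then 1 else 0)"
      proof (cases "i = i0")
        case True then show ?thesis using a b i0 by simp
      next
        case False then have "m k i \<noteq> 1" using un[OF i] by blast
        then have "m k i = 0" using c by blast
        then show ?thesis using a b False by simp
      qed
    qed simp
    also have "\<dots> = 1" using i0 by simp
    finally show ?thesis unfolding block_dist_def by simp
  qed
  have nn: "0 \<le> block_dist l t x y" for x y unfolding block_dist_def by (intro real_sqrt_ge_zero sum_nonneg) simp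
  show ?thesis
  proof (rule set_eqI, rule iffI)
    fix x :: nat assume x: "x \<in> nearest_classes K l t (\<lambda>k i. m k i + Y k i) (\<lambda>i. m 1 i + Y 0 i)"
    then have xr: "x \<in> {1..K}" and "\<forall>k'\<in>{1..K}. block_dist l t (\<lambda>i. m 1 i + Y 0 i) (\<lambda>i. m x i + Y x i)
        \<le> block_dist l t (\<lambda>i. m 1 i + Y 0 i) (\<lambda>i. m k' i + Y k' i)"
      unfolding nearest_classes_def by auto
    then have "block_dist l t (\<lambda>i. m 1 i + Y 0 i) (\<lambda>i. m x i + Y x i) \<le> 0"
      using K d1 by force
    then show "x \<in> {1}"
    proof (cases "x = 1")
      case False then have "x \<in> {2..K}" using xr by auto
      then show ?thesis using dk \<open>_ \<le> 0\<close> by force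
    qed simp
  next
    fix x :: nat assume "x \<in> {1}"
    then show "x \<in> nearest_classes K l t (\<lambda>k i. m k i + Y k i) (\<lambda>i. m 1 i + Y 0 i)"
      unfolding nearest_classes_def using K d1 nn by auto
  qed
qed

lemma coord_prob:
  fixes k K i d :: nat
  assumes "k \<le> K" "i < d" "0 \<le> p" "p \<le> 1"
  shows "measure_pmf.prob (Pi_pmf {..K} (\<lambda>_. 0) (\<lambda>_. noise_pmf d N p)) {Y. Y k i \<noteq> 0} \<le> p"
proof -
  let ?Om = "Pi_pmf {..K} (\<lambda>_. 0) (\<lambda>_. noise_pmf d N p)"
  have e0: "map_pmf (\<lambda>Y. Y k i) ?Om = map_pmf (\<lambda>f. f i) (map_pmf (\<lambda>Y. Y k) ?Om)"
    by (simp add: map_pmf_comp)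
  have e1: "map_pmf (\<lambda>Y. Y k) ?Om = noise_pmf d N p"
    by (subst Pi_pmf_component) (use assms in auto)
  have e2: "map_pmf (\<lambda>f. f i) (noise_pmf d N p) = map_pmf (\<lambda>b. if b then N else 0) (bernoulli_pmf p)"
    unfolding noise_pmf_def by (subst Pi_pmf_component) (use assms in auto)
  have eq: "map_pmf (\<lambda>Y. Y k i) ?Om = map_pmf (\<lambda>b. if b then N else 0) (bernoulli_pmf p)" unfolding e0 e1 e2 by (rule refl)
  have "measure_pmf.prob ?Om {Y. Y k i \<noteq> 0} = measure_pmf.prob (map_pmf (\<lambda>Y. Y k i) ?Om) {x. x \<noteq> 0}"
    by (simp add: vimage_def)
  also have "\<dots> = measure_pmf.prob (bernoulli_pmf p) ((\<lambda>b. if b then N else 0) -` {x. x \<noteq> 0})"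
    unfolding eq by simp
  also have "\<dots> \<le> measure_pmf.prob (bernoulli_pmf p) {True}"
    by (intro measure_pmf.finite_measure_mono) auto
  also have "\<dots> = p" using assms by (simp add: measure_pmf_single)
  finally show ?thesis .
qed

lemma dirty_prob:
  fixes K :: nat
  assumes "l dvd d" "t < d div l" "0 \<le> p" "p \<le> 1"
  shows "measure_pmf.prob (Pi_pmf {..K} (\<lambda>_. 0) (\<lambda>_. noise_pmf d N p))
           {Y. \<exists>k\<le>K. \<exists>i\<in>{t*l..<(t+1)*l}. Y k i \<noteq> 0} \<le> real (K+1) * real l * p"
proof -
  let ?Om = "Pi_pmf {..K} (\<lambda>_. 0) (\<lambda>_. noise_pmf d N p)"
  let ?I = "{..K} \<times> {t*l..<(t+1)*l}"
  have id: "i < d" if "i \<in> {t*l..<(t+1)*l}" for i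
  proof -
    have "(t+1)*l \<le> (d div l) * l" using assms by (intro mult_right_mono) auto
    also have "\<dots> = d" using assms by simp
    finally show ?thesis using that by auto
  qed
  have seq: "{Y. \<exists>k\<le>K. \<exists>i\<in>{t*l..<(t+1)*l}. Y k i \<noteq> 0} = (\<Union>x\<in>?I. {Y. Y (fst x) (snd x) \<noteq> 0})"
    by fastforce
  have "measure_pmf.prob ?Om {Y. \<exists>k\<le>K. \<exists>i\<in>{t*l..<(t+1)*l}. Y k i \<noteq> 0}
      \<le> (\<Sum>x\<in>?I. measure_pmf.prob ?Om {Y. Y (fst x) (snd x) \<noteq> 0})"
    unfolding seq by (rule measure_pmf.finite_measure_subadditive_finite) auto
  also have "\<dots> \<le> (\<Sum>x\<in>?I. p)"
    using assms id by (intro sum_mono coord_prob) auto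
  also have "\<dots> = real (K+1) * real l * p" by (simp add: algebra_simps)
  finally show ?thesis .
qed

lemma main_bound:
  fixes d l K :: nat and N p :: real and m :: "nat \<Rightarrow> nat \<Rightarrow> real"
  assumes K: "1 \<le> K" and d: "1 \<le> d" and ld: "l dvd d" and p: "0 \<le> p" "p \<le> 1"
    and mm: "modelB_means d l K m"
  shows "modelB_error d N p K m (d div l) \<le> 2 * real (K+1) * real l * p"
proof -
  define c where "c = d div l"
  define Om where "Om = Pi_pmf {..K} (\<lambda>_. 0) (\<lambda>_. noise_pmf d N p)"
  define g where "g = (\<lambda>Y. seg_rule d c K (\<lambda>k i. m k i + Y k i) (\<lambda>i. m 1 i + Y 0 i))"
  define Dirty where "Dirty t = {Y :: nat \<Rightarrow> nat \<Rightarrow> real. \<exists>k\<le>K. \<exists>i\<in>{t*l..<(t+1)*l}. Y k i \<noteq> 0}" for t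
  define D where "D Y = (\<Sum>t<c. indicator (Dirty t) Y :: real)" for Y
  define Bad where "Bad = {Y. real c / 2 \<le> D Y}"
  obtain q where q: "d = l * q" using ld by (auto simp: dvd_def)
  have l0: "l > 0" and q0: "q > 0" using d q by (auto intro: Nat.gr0I)
  have cq: "c = q" unfolding c_def using q l0 by simp
  have c1: "1 \<le> c" using cq q0 by simp
  have dc: "d div c = l" using cq q q0 by simp
  have err: "modelB_error d N p K m (d div l) = measure_pmf.prob (bind_pmf Om g) {k. k \<noteq> 1}"
    unfolding modelB_error_def Om_def g_def c_def ..
  have zero: "measure_pmf.prob (g Y) {k. k \<noteq> 1} = 0" if Y: "Y \<notin> Bad" for Y :: "nat \<Rightarrow> nat \<Rightarrow> real"
  proof -
    define E where "E = {t\<in>{..<c}. Y \<in> Dirty t}"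
    define C where "C = {t\<in>{..<c}. Y \<notin> Dirty t}"
    have DY: "D Y = real (card E)" unfolding D_def E_def
      by (simp add: indicator_def Int_def lessThan_iff)
    have CE: "C = {..<c} - E" unfolding C_def E_def by auto
    have cardC: "card C = c - card E" unfolding CE by (subst card_Diff_subset) (auto simp: E_def)
    have "card E \<le> c" using card_mono[of "{..<c}" E] unfolding E_def by auto
    then have c2: "c < 2 * card C" using Y DY cardC unfolding Bad_def by auto
    have cl: "\<forall>t\<in>C. nearest_classes K (d div c) t (\<lambda>k i. m k i + Y k i) (\<lambda>i. m 1 i + Y 0 i) = {1}"
    proof
      fix t assume t: "t \<in> C"
      then have "t < d div l" "\<forall>k\<le>K. \<forall>i\<in>{t*l..<(t+1)*l}. Y k i = 0"
        unfolding C_def Dirty_def c_def by auto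
      then show "nearest_classes K (d div c) t (\<lambda>k i. m k i + Y k i) (\<lambda>i. m 1 i + Y 0 i) = {1}"
        unfolding dc using clean_block[OF mm ld _ K] by blast
    qed
    show ?thesis unfolding g_def
      by (rule seg_zero[OF K _ c2 cl]) (auto simp: C_def)
  qed
  have "emeasure (bind_pmf Om g) {k. k \<noteq> 1} = (\<integral>\<^sup>+Y. emeasure (g Y) {k. k \<noteq> 1} \<partial>Om)"
    by simp
  also have "\<dots> \<le> (\<integral>\<^sup>+Y. indicator Bad Y \<partial>Om)"
  proof (intro nn_integral_mono)
    fix Y
    show "emeasure (g Y) {k. k \<noteq> 1} \<le> indicator Bad Y"
    proof (cases "Y \<in> Bad")
      case True then show ?thesis by (simp add: measure_pmf.emeasure_le_1)
    next
      case False then show ?thesis using zero[OF False] by (simp add: measure_pmf.emeasure_eq_measure)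
    qed
  qed
  also have "\<dots> = emeasure Om Bad" by simp
  finally have e1: "measure_pmf.prob (bind_pmf Om g) {k. k \<noteq> 1} \<le> measure_pmf.prob Om Bad"
    by (simp add: measure_pmf.emeasure_eq_measure)
  have intI: "integrable Om (indicator (Dirty t) :: _ \<Rightarrow> real)" for t
    by (intro integrable_real_indicator) (auto simp: less_top[symmetric])
  have intD: "integrable Om D" unfolding D_def using intI by auto
  have ED: "(\<integral>Y. D Y \<partial>Om) = (\<Sum>t<c. measure_pmf.prob Om (Dirty t))"
    unfolding D_def by (subst Bochner_Integration.integral_sum) (use intI in auto)
  also have "\<dots> \<le> (\<Sum>t<c. real (K+1) * real l * p)"
    unfolding Om_def Dirty_def c_def using ld p by (intro sum_mono dirty_prob) auto
  also have "\<dots> = real c * (real (K+1) * real l * p)" by simp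
  finally have ED': "(\<integral>Y. D Y \<partial>Om) \<le> real c * (real (K+1) * real l * p)" .
  have "measure_pmf.prob Om Bad = measure Om {Y \<in> space Om. real c / 2 \<le> D Y}"
    unfolding Bad_def by simp
  also have "\<dots> \<le> (\<integral>Y. D Y \<partial>Om) / (real c / 2)"
    using c1 by (intro integral_Markov_inequality_measure[OF intD, of UNIV] AE_I2) (auto simp: D_def intro: sum_nonneg)
  also have "\<dots> \<le> (real c * (real (K+1) * real l * p)) / (real c / 2)"
    using c1 ED' by (intro divide_right_mono) auto
  also have "\<dots> = 2 * real (K+1) * real l * p" using c1 by (simp add: field_simps)
  finally show ?thesis using err e1 by linarith
qed

theorem proposition7:
  fixes d l :: "nat \<Rightarrow> nat" and N p :: "nat \<Rightarrow> real" and K :: nat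
    and m :: "nat \<Rightarrow> nat \<Rightarrow> nat \<Rightarrow> real"
  assumes "2 \<le> K"
    and "\<forall>n. 1 \<le> d n \<and> 1 \<le> l n \<and> l n dvd d n \<and> N n > 0 \<and> 0 < p n \<and> p n < 1
              \<and> K \<le> l n + 1 \<and> modelB_means (d n) (l n) K (m n)"
    and "filterlim d at_top sequentially"
    and "filterlim l at_top sequentially"
    and "(\<lambda>n. real (l n) * p n) \<longlonglongrightarrow> 0"
  shows "(\<lambda>n. modelB_error (d n) (N n) (p n) K (m n) (d n div l n)) \<longlonglongrightarrow> 0"
proof (rule Lim_null_comparison)
  show "\<forall>\<^sub>F n in sequentially. norm (modelB_error (d n) (N n) (p n) K (m n) (d n div l n))
      \<le> 2 * real (K+1) * (real (l n) * p n)"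
  proof (intro always_eventually allI)
    fix n
    have h: "1 \<le> d n" "l n dvd d n" "0 \<le> p n" "p n \<le> 1" "modelB_means (d n) (l n) K (m n)"
      using assms(2) by (auto simp: less_imp_le)
    have "modelB_error (d n) (N n) (p n) K (m n) (d n div l n) \<le> 2 * real (K+1) * real (l n) * p n"
      using main_bound[OF _ h] assms(1) by simp
    moreover have "0 \<le> modelB_error (d n) (N n) (p n) K (m n) (d n div l n)"
      unfolding modelB_error_def by simp
    ultimately show "norm (modelB_error (d n) (N n) (p n) K (m n) (d n div l n))
      \<le> 2 * real (K+1) * (real (l n) * p n)" by (simp add: mult.assoc)
  qed
  show "(\<lambda>n. 2 * real (K+1) * (real (l n) * p n)) \<longlonglongrightarrow> 0"
    using tendsto_mult[OF tendsto_const assms(5), of "2 * real (K+1)"] by simp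
qed

end
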